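(* Let $\Gamma=(V,E)$ be a finite graph and let $\phi\in\Phi(\Gamma)$. If $\nvdash_\Gamma\phi$, then there exists a game $G=(V,\{S_v\}_{v\in V},\{u_v\}_{v\in V})$ over the graph $\Gamma$ such that $G\nvDash\phi$.
   Context: Graphs are finite, undirected, with no loops or multiple edges. For $v\in V$, $Adj(v)$ is the set of vertices adjacent to $v$ and $Adj^+(v)=Adj(v)\cup\{v\}$. For $U\subseteq V$ the border is ${\cal B}(U)=\{v\in U\mid (v,w)\in E\text{ for some }w\in V\setminus U\}$. A cut $(U,W)$ of $\Gamma$ is a partition $V=U\sqcup W$. Formulas: $\Phi(\Gamma)$ is the smallest set containing $\bot$, all expressions $A\rhd B$ with $A,B\subseteq V$, and $\phi\rightarrow\psi$ for $\phi,\psi\in\Phi(\Gamma)$ (other connectives, e.g. $\neg$, are the usual abbreviations). $A,B$ denotes $A\cup B$, and a single vertex $v$ stands for $\{v\}$. Proof system: $\vdash_\Gamma\phi$ means $\phi$ is derivable from propositional tautologies of $\Phi(\Gamma)$ and the axioms (1) Reflexivity: $A\rhd B$ whenever $B\subseteq A$; (2) Augmentation: $A\rhd B\rightarrow A,C\rhd B,C$; (3) Transitivity: $A\rhd B\rightarrow(B\rhd C\rightarrow A\rhd C)$; (4) Contiguity: $A,B\rhd C\rightarrow {\cal B}(U),{\cal B}(W),B\rhd C$ for every cut $(U,W)$ of $\Gamma$ with $A\subseteq U$ and $C\subseteq W$; using the rule Modus Ponens. Semantics: a game over $\Gamma$ is a strategic game $G=(V,\{S_v\}_{v\in V},\{u_v\}_{v\in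 V})$ whose set of players is $V$, each strategy set $S_v$ is a finite set, and each pay-off function $u_v$ (real-valued on strategy profiles) depends only on the strategies of the players in $Adj^+(v)$. $NE(G)$ is the set of (pure) Nash equilibria of $G$. For profiles $\mathbf s=\langle s_v\rangle_{v\in V}$, $\mathbf t=\langle t_v\rangle_{v\in V}$ and $X\subseteq V$, $\mathbf s=_X\mathbf t$ means $s_x=t_x$ for all $x\in X$. Truth: $G\nvDash\bot$; $G\vDash A\rhd B$ iff for all $\mathbf s,\mathbf t\in NE(G)$, $\mathbf s=_A\mathbf t$ implies $\mathbf s=_B\mathbf t$; $G\vDash\psi_1\rightarrow\psi_2$ iff $G\nvDash\psi_1$ or $G\vDash\psi_2$. *)

theory Defs
  imports Main "HOL.Real"
begin

definition graph :: "'v set \<Rightarrow> ('v \<Rightarrow> 'v \<Rightarrow> bool) \<Rightarrow> bool" where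
  "graph V E \<longleftrightarrow> finite V \<and> (\<forall>v w. E v w \<longrightarrow> v \<in> V \<and> w \<in> V)
     \<and> (\<forall>v w. E v w \<longrightarrow> E w v) \<and> (\<forall>v. \<not> E v v)"

definition Adj :: "'v set \<Rightarrow> ('v \<Rightarrow> 'v \<Rightarrow> bool) \<Rightarrow> 'v \<Rightarrow> 'v set" where
  "Adj V E v = {w \<in> V. E v w}"

definition AdjPlus :: "'v set \<Rightarrow> ('v \<Rightarrow> 'v \<Rightarrow> bool) \<Rightarrow> 'v \<Rightarrow> 'v set" where
  "AdjPlus V E v = insert v (Adj V E v)"

definition border :: "'v set \<Rightarrow> ('v \<Rightarrow> 'v \<Rightarrow> bool) \<Rightarrow> 'v set \<Rightarrow> 'v set" where
  "border V E U = {v \<in> U. \<exists>w \<in> V - U. E v w}"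

definition is_cut :: "'v set \<Rightarrow> 'v set \<Rightarrow> 'v set \<Rightarrow> bool" where
  "is_cut V U W \<longleftrightarrow> U \<union> W = V \<and> U \<inter> W = {}"

datatype 'v fml = Bot | Rhd "'v set" "'v set" | Imp "'v fml" "'v fml"

fun wf_fml :: "'v set \<Rightarrow> 'v fml \<Rightarrow> bool" where
  "wf_fml V Bot = True"
| "wf_fml V (Rhd A B) = (A \<subseteq> V \<and> B \<subseteq> V)"
| "wf_fml V (Imp p q) = (wf_fml V p \<and> wf_fml V q)"

fun peval :: "('v set \<Rightarrow> 'v set \<Rightarrow> bool) \<Rightarrow> 'v fml \<Rightarrow> bool" where
  "peval I Bot = False"
| "peval I (Rhd A B) = I A B"
| "peval I (Imp p q) = (peval I p \<longrightarrow> peval I q)"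

definition tautology :: "'v fml \<Rightarrow> bool" where
  "tautology p \<longleftrightarrow> (\<forall>I. peval I p)"

inductive derivable :: "'v set \<Rightarrow> ('v \<Rightarrow> 'v \<Rightarrow> bool) \<Rightarrow> 'v fml \<Rightarrow> bool"
  for V :: "'v set" and E :: "'v \<Rightarrow> 'v \<Rightarrow> bool" where
  taut: "wf_fml V p \<Longrightarrow> tautology p \<Longrightarrow> derivable V E p"
| refl: "A \<subseteq> V \<Longrightarrow> B \<subseteq> A \<Longrightarrow> derivable V E (Rhd A B)"
| aug: "A \<subseteq> V \<Longrightarrow> B \<subseteq> V \<Longrightarrow> C \<subseteq> V \<Longrightarrow>
          derivable V E (Imp (Rhd A B) (Rhd (A \<union> C) (B \<union> C)))"
| trans: "A \<subseteq> V \<Longrightarrow> B \<subseteq> V \<Longrightarrow> C \<subseteq> V \<Longrightarrow>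
          derivable V E (Imp (Rhd A B) (Imp (Rhd B C) (Rhd A C)))"
| contig: "A \<subseteq> V \<Longrightarrow> B \<subseteq> V \<Longrightarrow> C \<subseteq> V \<Longrightarrow> is_cut V U W \<Longrightarrow> A \<subseteq> U \<Longrightarrow> C \<subseteq> W \<Longrightarrow>
          derivable V E (Imp (Rhd (A \<union> B) C) (Rhd (border V E U \<union> border V E W \<union> B) C))"
| mp: "derivable V E (Imp p q) \<Longrightarrow> derivable V E p \<Longrightarrow> derivable V E q"

text \<open>Strategies are represented by natural numbers (any finite strategy set embeds in nat).
  A strategy profile is a function assigning to each player v in V a strategy in S v;
  it is fixed to 0 outside V so that profiles are determined by their values on V.\<close>

definition profiles :: "'v set \<Rightarrow> ('v \<Rightarrow> nat set) \<Rightarrow> ('v \<Rightarrow> nat) set" where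
  "profiles V S = {s. (\<forall>v \<in> V. s v \<in> S v) \<and> (\<forall>v. v \<notin> V \<longrightarrow> s v = 0)}"

definition agree_on :: "'v set \<Rightarrow> ('v \<Rightarrow> nat) \<Rightarrow> ('v \<Rightarrow> nat) \<Rightarrow> bool" where
  "agree_on X s t \<longleftrightarrow> (\<forall>x \<in> X. s x = t x)"

definition is_game :: "'v set \<Rightarrow> ('v \<Rightarrow> 'v \<Rightarrow> bool) \<Rightarrow> ('v \<Rightarrow> nat set)
                        \<Rightarrow> ('v \<Rightarrow> ('v \<Rightarrow> nat) \<Rightarrow> real) \<Rightarrow> bool" where
  "is_game V E S u \<longleftrightarrow> (\<forall>v \<in> V. finite (S v))
     \<and> (\<forall>v \<in> V. \<forall>s \<in> profiles V S. \<forall>t \<in> profiles V S.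
            agree_on (AdjPlus V E v) s t \<longrightarrow> u v s = u v t)"

definition NE :: "'v set \<Rightarrow> ('v \<Rightarrow> nat set) \<Rightarrow> ('v \<Rightarrow> ('v \<Rightarrow> nat) \<Rightarrow> real) \<Rightarrow> ('v \<Rightarrow> nat) set" where
  "NE V S u = {s \<in> profiles V S. \<forall>v \<in> V. \<forall>x \<in> S v. u v (s(v := x)) \<le> u v s}"

fun sat :: "'v set \<Rightarrow> ('v \<Rightarrow> nat set) \<Rightarrow> ('v \<Rightarrow> ('v \<Rightarrow> nat) \<Rightarrow> real) \<Rightarrow> 'v fml \<Rightarrow> bool" where
  "sat V S u Bot = False"
| "sat V S u (Rhd A B) = (\<forall>s \<in> NE V S u. \<forall>t \<in> NE V S u. agree_on A s t \<longrightarrow> agree_on B s t)"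
| "sat V S u (Imp p q) = (\<not> sat V S u p \<or> sat V S u q)"

end

theory Submission
  imports Defs "HOL-Library.Nat_Bijection"
begin


lemma deriv_wf: "derivable V E p \<Longrightarrow> wf_fml V p"
proof (induction rule: derivable.induct)
  case (contig A B C U W)
  have "border V E U \<subseteq> V" "border V E W \<subseteq> V"
    using contig(4) unfolding border_def is_cut_def by blast+
  then show ?case using contig(1-3) by simp
qed auto

lemma peval_restrict:
  "wf_fml V p \<Longrightarrow> peval I p = peval (\<lambda>A B. (A,B) \<in> {(A,B). A \<subseteq> V \<and> B \<subseteq> V \<and> I A B}) p"
  by (induction p) auto

lemma peval_foldr: "peval I (foldr Imp ps q) = ((\<forall>\<psi>\<in>set ps. peval I \<psi>) \<longrightarrow> peval I q)"
  by (induction ps) auto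

lemma wf_foldr: "wf_fml V (foldr Imp ps q) = ((\<forall>\<psi>\<in>set ps. wf_fml V \<psi>) \<and> wf_fml V q)"
  by (induction ps) auto

lemma deriv_foldr: "\<forall>\<psi>\<in>set ps. derivable V E \<psi> \<Longrightarrow> derivable V E (foldr Imp ps q) \<Longrightarrow> derivable V E q"
  by (induction ps) (auto intro: derivable.mp)

lemma exists_val:
  assumes wf: "wf_fml V \<phi>" and nd: "\<not> derivable V E \<phi>" and fin: "finite V"
  shows "\<exists>I. (\<forall>\<psi>. derivable V E \<psi> \<longrightarrow> peval I \<psi>) \<and> \<not> peval I \<phi>"
proof (rule ccontr)
  assume H: "\<not> ?thesis"
  define F where "F = {R. R \<subseteq> Pow V \<times> Pow V \<and> \<not> peval (\<lambda>A B. (A,B) \<in> R) \<phi>}"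
  have sub: "F \<subseteq> Pow (Pow V \<times> Pow V)" unfolding F_def by blast
  have finF: "finite F" by (rule finite_subset[OF sub]) (simp add: fin)
  have ex: "\<exists>\<psi>. derivable V E \<psi> \<and> \<not> peval (\<lambda>A B. (A,B) \<in> R) \<psi>" if "R \<in> F" for R
  proof -
    have "\<not> ((\<forall>\<psi>. derivable V E \<psi> \<longrightarrow> peval (\<lambda>A B. (A,B) \<in> R) \<psi>) \<and> \<not> peval (\<lambda>A B. (A,B) \<in> R) \<phi>)"
      using H by (rule contrapos_nn) (rule exI)
    moreover have "\<not> peval (\<lambda>A B. (A,B) \<in> R) \<phi>" using that unfolding F_def by simp
    ultimately show ?thesis by blast
  qed
  then have "\<forall>R\<in>F. \<exists>\<psi>. derivable V E \<psi> \<and> \<not> peval (\<lambda>A B. (A,B) \<in> R) \<psi>" by blast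
  then obtain g where g: "\<forall>R\<in>F. derivable V E (g R) \<and> \<not> peval (\<lambda>A B. (A,B) \<in> R) (g R)"
    by (rule bchoice[THEN exE])
  obtain xs where xs: "set xs = F" using finite_list[OF finF] by blast
  define ps where "ps = map g xs"
  have dps: "\<forall>\<psi>\<in>set ps. derivable V E \<psi>" using g xs unfolding ps_def by auto
  have wfps: "\<forall>\<psi>\<in>set ps. wf_fml V \<psi>" using dps deriv_wf by blast
  have "tautology (foldr Imp ps \<phi>)"
    unfolding tautology_def peval_foldr
  proof (intro allI impI)
    fix I assume all: "\<forall>\<psi>\<in>set ps. peval I \<psi>"
    show "peval I \<phi>"
    proof (rule ccontr)
      assume np: "\<not> peval I \<phi>"
      define R where "R = {(A,B). A \<subseteq> V \<and> B \<subseteq> V \<and> I A B}"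
      have "R \<in> F" using np peval_restrict[OF wf, of I] unfolding F_def R_def by auto
      then have "g R \<in> set ps" "\<not> peval (\<lambda>A B. (A,B) \<in> R) (g R)" using g xs unfolding ps_def by auto
      moreover have "wf_fml V (g R)" using wfps calculation by blast
      ultimately show False using all peval_restrict[of V "g R" I] unfolding R_def by auto
    qed
  qed
  then have "derivable V E (foldr Imp ps \<phi>)"
    using wf wfps by (intro derivable.taut) (auto simp: wf_foldr)
  then show False using deriv_foldr[OF dps] nd by blast
qed



locale valid =
  fixes V :: "'v set" and E :: "'v \<Rightarrow> 'v \<Rightarrow> bool" and I :: "'v set \<Rightarrow> 'v set \<Rightarrow> bool"
  assumes gr: "graph V E"
  and I_refl: "A \<subseteq> V \<Longrightarrow> B \<subseteq> A \<Longrightarrow> I A B"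
  and I_aug: "A \<subseteq> V \<Longrightarrow> B \<subseteq> V \<Longrightarrow> C \<subseteq> V \<Longrightarrow> I A B \<Longrightarrow> I (A \<union> C) (B \<union> C)"
  and I_trans: "A \<subseteq> V \<Longrightarrow> B \<subseteq> V \<Longrightarrow> C \<subseteq> V \<Longrightarrow> I A B \<Longrightarrow> I B C \<Longrightarrow> I A C"
  and I_contig: "A \<subseteq> V \<Longrightarrow> B \<subseteq> V \<Longrightarrow> C \<subseteq> V \<Longrightarrow> is_cut V U W \<Longrightarrow> A \<subseteq> U \<Longrightarrow> C \<subseteq> W \<Longrightarrow>
          I (A \<union> B) C \<Longrightarrow> I (border V E U \<union> border V E W \<union> B) C"
begin

lemma finV: "finite V" using gr unfolding graph_def by blast
lemma EV: "E a b \<Longrightarrow> a \<in> V \<and> b \<in> V" using gr unfolding graph_def by blast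
lemma Esym: "E a b \<Longrightarrow> E b a" using gr unfolding graph_def by blast

lemma I_union:
  assumes "P \<subseteq> V" "Q1 \<subseteq> V" "Q2 \<subseteq> V" "I P Q1" "I P Q2"
  shows "I P (Q1 \<union> Q2)"
proof -
  have a: "I P (Q1 \<union> P)" using I_aug[OF assms(1,2,1) assms(4)] by simp
  have b: "I (P \<union> Q1) (Q2 \<union> Q1)" using I_aug[OF assms(1,3,2) assms(5)] .
  have "I P (Q2 \<union> Q1)" using I_trans[of P "Q1 \<union> P" "Q2 \<union> Q1"] a b assms by (simp add: Un_commute)
  then show ?thesis by (simp add: Un_commute)
qed

lemma I_fin: "finite Q \<Longrightarrow> P \<subseteq> V \<Longrightarrow> Q \<subseteq> V \<Longrightarrow> (\<forall>q\<in>Q. I P {q}) \<Longrightarrow> I P Q"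
proof (induction Q rule: finite_induct)
  case empty then show ?case using I_refl by blast
next
  case (insert x F)
  have "I P ({x} \<union> F)" using I_union[of P "{x}" F] insert by auto
  then show ?case by simp
qed

lemma I_single: "P \<subseteq> V \<Longrightarrow> Q \<subseteq> V \<Longrightarrow> I P Q \<longleftrightarrow> (\<forall>q\<in>Q. I P {q})"
proof
  assume "P \<subseteq> V" "Q \<subseteq> V" "I P Q"
  then show "\<forall>q\<in>Q. I P {q}" using I_trans[of P Q] I_refl[of Q] by blast
next
  assume "P \<subseteq> V" "Q \<subseteq> V" "\<forall>q\<in>Q. I P {q}"
  then show "I P Q" using I_fin finite_subset finV by blast
qed

definition cl :: "'v set \<Rightarrow> 'v set" where "cl P = {w \<in> V. I P {w}}"

lemma cl_sub: "cl P \<subseteq> V" unfolding cl_def by blast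
lemma I_cl: "P \<subseteq> V \<Longrightarrow> I P (cl P)" using I_single[of P "cl P"] cl_sub unfolding cl_def by blast
lemma cl_ext: "P \<subseteq> V \<Longrightarrow> P \<subseteq> cl P" unfolding cl_def using I_refl by blast

definition Rel :: "'v set \<Rightarrow> 'v \<Rightarrow> 'v \<Rightarrow> bool" where
  "Rel X a b \<longleftrightarrow> a \<in> V - X \<and> b \<in> V - X \<and> (E a b \<or> (\<exists>y. E a y \<and> E y b))"

definition Dset :: "'v set \<Rightarrow> 'v \<Rightarrow> 'v set" where "Dset X v = {w. (Rel X)\<^sup>*\<^sup>* v w}"

lemma Dset_sub: "v \<in> V - X \<Longrightarrow> Dset X v \<subseteq> V - X"
proof
  fix w assume "v \<in> V - X" "w \<in> Dset X v"
  then have "(Rel X)\<^sup>*\<^sup>* v w" unfolding Dset_def by simp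
  then show "w \<in> V - X" using \<open>v \<in> V - X\<close>
    by (induction rule: rtranclp_induct) (auto simp: Rel_def)
qed

lemma Dset_closed:
  assumes P: "P \<subseteq> V" and v: "v \<in> V - cl P" and d: "d \<in> Dset (cl P) v"
  shows "\<not> I (V - Dset (cl P) v) {d}"
proof
  assume H: "I (V - Dset (cl P) v) {d}"
  define X where "X = cl P"
  define D where "D = Dset X v"
  have DX: "D \<subseteq> V - X" using Dset_sub v unfolding D_def X_def by blast
  have Dstep: "w \<in> D" if "a \<in> D" "Rel X a w" for a w
    using that unfolding D_def Dset_def by (auto intro: rtranclp.rtrancl_into_rtrancl)
  define W where "W = D \<union> {y \<in> V. \<exists>d\<in>D. E d y}"
  define U where "U = V - W"
  have WV: "W \<subseteq> V" using DX unfolding W_def by blast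
  have cut: "is_cut V U W" unfolding is_cut_def U_def using WV by blast
  have a: "W - D \<subseteq> X"
  proof
    fix y assume y: "y \<in> W - D"
    then obtain e where e: "e \<in> D" "E e y" "y \<in> V" unfolding W_def by blast
    show "y \<in> X"
    proof (rule ccontr)
      assume "y \<notin> X"
      then have "Rel X e y" using e DX unfolding Rel_def by blast
      then show False using Dstep e y by blast
    qed
  qed
  have b: "border V E W \<subseteq> X"
  proof
    fix x assume x: "x \<in> border V E W"
    then obtain w where w: "w \<in> V - W" "E x w" "x \<in> W" unfolding border_def by blast
    have "x \<notin> D" using w unfolding W_def by blast
    then show "x \<in> X" using a w by blast
  qed
  have c: "border V E U \<subseteq> X"
  proof
    fix u assume u: "u \<in> border V E U"
    then obtain w where w: "w \<in> W" "E u w" "u \<in> U" unfolding border_def U_def by blast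
    have uV: "u \<in> V" "u \<notin> W" using w(3) unfolding U_def by auto
    have "w \<notin> D" using w uV Esym unfolding W_def by blast
    then obtain e where e: "e \<in> D" "E e w" using w unfolding W_def by blast
    show "u \<in> X"
    proof (rule ccontr)
      assume "u \<notin> X"
      then have "Rel X e u" using e DX uV w(2) Esym unfolding Rel_def by blast
      then have "u \<in> D" using Dstep e by blast
      then show False using uV unfolding W_def by blast
    qed
  qed
  have dD: "d \<in> D" using d unfolding D_def X_def .
  have eq: "U \<union> (W - D) = V - D" unfolding U_def W_def using DX by blast
  have "I (border V E U \<union> border V E W \<union> (W - D)) {d}"
  proof (rule I_contig[of U "W - D" "{d}" U W])
    show "U \<subseteq> V" unfolding U_def by blast
    show "W - D \<subseteq> V" using WV by blast
    show "{d} \<subseteq> V" using dD DX by blast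
    show "is_cut V U W" by (rule cut)
    show "U \<subseteq> U" by blast
    show "{d} \<subseteq> W" using dD unfolding W_def by blast
    show "I (U \<union> (W - D)) {d}" using H eq unfolding D_def X_def by simp
  qed
  moreover have Z: "border V E U \<union> border V E W \<union> (W - D) \<subseteq> X" using a b c by blast
  moreover have XV: "X \<subseteq> V" using cl_sub unfolding X_def .
  ultimately have IZ: "I (border V E U \<union> border V E W \<union> (W - D)) {d}" and
     Z: "border V E U \<union> border V E W \<union> (W - D) \<subseteq> X" and XV: "X \<subseteq> V" by blast+
  have dV: "{d} \<subseteq> V" using dD DX by blast
  have IXZ: "I X (border V E U \<union> border V E W \<union> (W - D))" by (rule I_refl[OF XV Z])
  have "I X {d}" by (rule I_trans[OF XV order.trans[OF Z XV] dV IXZ IZ])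
  then have "I P {d}" using I_trans[OF P XV dV] I_cl[OF P] unfolding X_def by blast
  then have "d \<in> X" unfolding X_def cl_def using dD DX by blast
  then show False using dD DX by blast
qed

lemma Dset_valid:
  assumes P: "P \<subseteq> V" and v: "v \<in> V - cl P"
    and Q1: "Q1 \<subseteq> V" and Q2: "Q2 \<subseteq> V" and IQ: "I Q1 Q2" and dis: "Q1 \<inter> Dset (cl P) v = {}"
  shows "Q2 \<inter> Dset (cl P) v = {}"
proof (rule ccontr)
  assume "Q2 \<inter> Dset (cl P) v \<noteq> {}"
  then obtain q where q: "q \<in> Q2" "q \<in> Dset (cl P) v" by blast
  have VD: "V - Dset (cl P) v \<subseteq> V" by blast
  have qV: "{q} \<subseteq> V" using q Q2 by blast
  have "I (V - Dset (cl P) v) Q1" using I_refl[OF VD] Q1 dis by blast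
  then have "I (V - Dset (cl P) v) Q2" using I_trans[OF VD Q1 Q2] IQ by blast
  moreover have "I Q2 {q}" using I_refl[OF Q2] q by blast
  ultimately have "I (V - Dset (cl P) v) {q}" using I_trans[OF VD Q2 qV] by blast
  then show False using Dset_closed[OF P v q(2)] by blast
qed

lemma Dset_v: "v \<in> Dset X v" unfolding Dset_def by simp

end


definition ug :: "'v set \<Rightarrow> ('v \<Rightarrow> 'v \<Rightarrow> bool) \<Rightarrow> 'v set \<Rightarrow> 'v \<Rightarrow> ('v \<Rightarrow> nat) \<Rightarrow> real" where
  "ug V E D w s = (if w \<in> D then (if \<exists>x\<in>Adj V E w. s x = 1 then real (s w) else 0)
     else (if (s w = 1) = (\<exists>a\<in>Adj V E w \<inter> D. \<exists>c\<in>Adj V E w \<inter> D. s a \<noteq> s c) then 1 else 0))"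

abbreviation Sb :: "'v \<Rightarrow> nat set" where "Sb \<equiv> (\<lambda>_. {0,1})"

lemma ug_game: "is_game V E Sb (ug V E D)"
  unfolding is_game_def
proof (intro conjI ballI impI)
  fix v s t assume "v \<in> V" "agree_on (AdjPlus V E v) s t"
  then have a: "s v = t v" and b: "\<And>x. x \<in> Adj V E v \<Longrightarrow> s x = t x"
    unfolding agree_on_def AdjPlus_def by auto
  have c: "(\<exists>x\<in>Adj V E v. s x = 1) = (\<exists>x\<in>Adj V E v. t x = 1)" using b by auto
  have d: "(\<exists>a\<in>Adj V E v \<inter> D. \<exists>c\<in>Adj V E v \<inter> D. s a \<noteq> s c) =
           (\<exists>a\<in>Adj V E v \<inter> D. \<exists>c\<in>Adj V E v \<inter> D. t a \<noteq> t c)" using b by auto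
  show "ug V E D v s = ug V E D v t" unfolding ug_def using a c d by simp
qed auto

context
  fixes V :: "'v set" and E and D :: "'v set" and v :: 'v
  assumes gr: "graph V E" and DV: "D \<subseteq> V" and vD: "v \<in> D"
  and conn: "\<And>P. P v \<Longrightarrow> (\<And>a b. a \<in> D \<Longrightarrow> b \<in> D \<Longrightarrow> (E a b \<or> (\<exists>y. E a y \<and> E y b)) \<Longrightarrow> P a \<Longrightarrow> P b)
              \<Longrightarrow> \<forall>w\<in>D. P w"
begin

lemma EV': "E a b \<Longrightarrow> a \<in> V \<and> b \<in> V" using gr unfolding graph_def by blast
lemma Esym': "E a b \<Longrightarrow> E b a" using gr unfolding graph_def by blast
lemma Eirr: "\<not> E a a" using gr unfolding graph_def by blast

lemma upd_nbr: "y \<in> Adj V E w \<Longrightarrow> (s(w := x)) y = s y"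
  using Eirr unfolding Adj_def by auto

definition zz :: "'v \<Rightarrow> nat" where "zz = (\<lambda>_. 0)"
definition oo :: "'v \<Rightarrow> nat" where "oo = (\<lambda>w. if w \<in> D then 1 else 0)"

lemma NE_sub: assumes s: "s \<in> NE V Sb (ug V E D)" shows "s = zz \<or> s = oo"
proof -
  have prof: "\<And>w. w \<in> V \<Longrightarrow> s w \<in> {0,1}" "\<And>w. w \<notin> V \<Longrightarrow> s w = 0"
    using s unfolding NE_def profiles_def by auto
  have dev: "\<And>w x. w \<in> V \<Longrightarrow> x \<in> {0,1} \<Longrightarrow> ug V E D w (s(w := x)) \<le> ug V E D w s"
    using s unfolding NE_def by blast
  define nc where "nc w \<longleftrightarrow> (\<exists>a\<in>Adj V E w \<inter> D. \<exists>c\<in>Adj V E w \<inter> D. s a \<noteq> s c)" for w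
  have nc_upd: "(\<exists>a\<in>Adj V E w \<inter> D. \<exists>c\<in>Adj V E w \<inter> D. (s(w:=x)) a \<noteq> (s(w:=x)) c) = nc w" for w x
  proof -
    have eq: "(s(w:=x)) a = s a" if "a \<in> Adj V E w \<inter> D" for a using upd_nbr[of a w s x] that by blast
    show ?thesis unfolding nc_def
    proof
      assume "\<exists>a\<in>Adj V E w \<inter> D. \<exists>c\<in>Adj V E w \<inter> D. (s(w:=x)) a \<noteq> (s(w:=x)) c"
      then obtain a c where "a \<in> Adj V E w \<inter> D" "c \<in> Adj V E w \<inter> D" "(s(w:=x)) a \<noteq> (s(w:=x)) c" by blast
      then show "\<exists>a\<in>Adj V E w \<inter> D. \<exists>c\<in>Adj V E w \<inter> D. s a \<noteq> s c" using eq by metis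
    next
      assume "\<exists>a\<in>Adj V E w \<inter> D. \<exists>c\<in>Adj V E w \<inter> D. s a \<noteq> s c"
      then obtain a c where "a \<in> Adj V E w \<inter> D" "c \<in> Adj V E w \<inter> D" "s a \<noteq> s c" by blast
      then show "\<exists>a\<in>Adj V E w \<inter> D. \<exists>c\<in>Adj V E w \<inter> D. (s(w:=x)) a \<noteq> (s(w:=x)) c" using eq by metis
    qed
  qed
  have one: "s w = 1 \<longleftrightarrow> nc w" if w: "w \<in> V" "w \<notin> D" for w
  proof (rule ccontr)
    assume ne: "(s w = 1) \<noteq> nc w"
    define x where "x = (if nc w then 1 else 0::nat)"
    have "ug V E D w (s(w := x)) = 1" using w nc_upd[of w x] unfolding ug_def x_def by simp
    moreover have "ug V E D w s = 0" using w ne unfolding ug_def nc_def by simp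
    moreover have "x \<in> {0,1}" unfolding x_def by simp
    ultimately show False using dev[OF w(1)] by fastforce
  qed
  have two: "s y = 0" if d: "d \<in> D" "s d = 0" "y \<in> Adj V E d" for d y
  proof (rule ccontr)
    assume "s y \<noteq> 0"
    then have y1: "s y = 1" using prof(1)[of y] d(3) unfolding Adj_def by auto
    have dV: "d \<in> V" using d DV by blast
    have "ug V E D d (s(d := 1)) = 1" using d y1 upd_nbr[OF d(3), of s 1] unfolding ug_def by auto
    moreover have "ug V E D d s = 0" using d unfolding ug_def by simp
    ultimately show False using dev[OF dV, of 1] by simp
  qed
  have step0: "s b = 0" if ab: "a \<in> D" "b \<in> D" "E a b \<or> (\<exists>y. E a y \<and> E y b)" "s a = 0" for a b
  proof (cases "E a b")
    case True
    then have "b \<in> Adj V E a" unfolding Adj_def using EV' by blast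
    then show ?thesis using two ab by blast
  next
    case False
    then obtain y where y: "E a y" "E y b" using ab by blast
    have yA: "y \<in> Adj V E a" unfolding Adj_def using y EV' by blast
    have bA: "b \<in> Adj V E y" unfolding Adj_def using y EV' by blast
    show ?thesis
    proof (cases "y \<in> D")
      case True
      then have "s y = 0" using two ab yA by blast
      then show ?thesis using two True bA by blast
    next
      case False
      show ?thesis
      proof (rule ccontr)
        assume "s b \<noteq> 0"
        have aA: "a \<in> Adj V E y" unfolding Adj_def using y EV' Esym' by blast
        have "s a \<noteq> s b" using ab(4) \<open>s b \<noteq> 0\<close> by simp
        then have "nc y" unfolding nc_def using aA bA ab(1,2) by blast
        then have "s y = 1" using one[of y] False y EV' by blast
        moreover have "s y = 0" using two ab yA by blast
        ultimately show False by simp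
      qed
    qed
  qed
  have const: "\<forall>w\<in>D. s w = s v"
  proof (rule conn)
    show "s v = s v" ..
  next
    fix a b assume ab: "a \<in> D" "b \<in> D" "E a b \<or> (\<exists>y. E a y \<and> E y b)" "s a = s v"
    have ba: "E b a \<or> (\<exists>y. E b y \<and> E y a)" using ab(3) Esym' by blast
    have aV: "s a \<in> {0,1}" "s b \<in> {0,1}" using prof ab DV by auto
    show "s b = s v"
    proof (cases "s a = 0")
      case True then show ?thesis using step0[OF ab(1-3)] ab(4) by simp
    next
      case False
      have "s b \<noteq> 0" using step0[OF ab(2,1) ba] False by blast
      then show ?thesis using aV False ab(4) by auto
    qed
  qed
  have outside: "s w = 0" if "w \<in> V" "w \<notin> D" for w
  proof -
    have "\<not> nc w" unfolding nc_def using const by (metis IntD2)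
    then have "s w \<noteq> 1" using one[OF that] by blast
    then show ?thesis using prof(1)[OF that(1)] by blast
  qed
  have "s v \<in> {0,1}" using prof vD DV by blast
  then show ?thesis
  proof
    assume "s v = 0"
    have "s w = 0" for w using const outside prof(2) \<open>s v = 0\<close> by (cases "w \<in> V"; cases "w \<in> D") auto
    then have "s = zz" unfolding zz_def by (intro ext)
    then show ?thesis ..
  next
    assume "s v \<in> {1}"
    then have sv: "s v = 1" by blast
    have "s w = (if w \<in> D then 1 else 0)" for w using const outside prof(2) sv DV by (cases "w \<in> V"; cases "w \<in> D") auto
    then have "s = oo" unfolding oo_def by (intro ext)
    then show ?thesis ..
  qed
qed

lemma zz_NE: "zz \<in> NE V Sb (ug V E D)"
  unfolding NE_def
proof (intro CollectI conjI ballI)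
  show "zz \<in> profiles V Sb" unfolding profiles_def zz_def by auto
next
  fix w x assume w: "w \<in> V" and x: "x \<in> {0::nat,1}"
  have nb: "\<And>y. y \<in> Adj V E w \<Longrightarrow> (zz(w := x)) y = 0" using upd_nbr unfolding zz_def by metis
  show "ug V E D w (zz(w := x)) \<le> ug V E D w zz"
  proof (cases "w \<in> D")
    case True then show ?thesis using nb unfolding ug_def by (simp add: zz_def)
  next
    case False then show ?thesis unfolding ug_def zz_def by auto
  qed
qed

lemma oo_NE: "oo \<in> NE V Sb (ug V E D)"
  unfolding NE_def
proof (intro CollectI conjI ballI)
  show "oo \<in> profiles V Sb" unfolding profiles_def oo_def using DV by auto
next
  fix w x assume w: "w \<in> V" and x: "x \<in> {0::nat,1}"
  have nb: "\<And>y. y \<in> Adj V E w \<Longrightarrow> (oo(w := x)) y = oo y" using upd_nbr by metis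
  show "ug V E D w (oo(w := x)) \<le> ug V E D w oo"
  proof (cases "w \<in> D")
    case True
    have c: "(\<exists>y\<in>Adj V E w. (oo(w := x)) y = 1) = (\<exists>y\<in>Adj V E w. oo y = 1)" using nb by auto
    show ?thesis using True x c unfolding ug_def by (auto simp: oo_def)
  next
    case False then show ?thesis unfolding ug_def oo_def by auto
  qed
qed

lemma zz_NE': "(\<lambda>_. 0) \<in> NE V Sb (ug V E D)"
  using zz_NE unfolding zz_def .

lemma NE_eq: "NE V Sb (ug V E D) = {zz, oo}"
  using NE_sub zz_NE oo_NE by blast

lemma sat_D: "sat V Sb (ug V E D) (Rhd P Q) \<longleftrightarrow> (P \<inter> D = {} \<longrightarrow> Q \<inter> D = {})"
proof -
  have ag: "agree_on X zz oo \<longleftrightarrow> X \<inter> D = {}" for X unfolding agree_on_def zz_def oo_def by auto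
  have ag2: "agree_on X oo zz \<longleftrightarrow> X \<inter> D = {}" for X unfolding agree_on_def zz_def oo_def by auto
  have ag3: "agree_on X s s" for X s unfolding agree_on_def by auto
  show ?thesis unfolding sat.simps NE_eq using ag ag2 ag3 by auto
qed

end


definition Sc :: "nat \<Rightarrow> 'v \<Rightarrow> nat set" where "Sc n = (\<lambda>_. set_encode ` Pow {..<n})"
definition proj :: "'v set \<Rightarrow> nat \<Rightarrow> ('v \<Rightarrow> nat) \<Rightarrow> ('v \<Rightarrow> nat)" where
  "proj V i s = (\<lambda>w. if w \<in> V \<and> i \<in> set_decode (s w) then 1 else 0)"
definition Uc :: "'v set \<Rightarrow> nat \<Rightarrow> (nat \<Rightarrow> 'v \<Rightarrow> ('v \<Rightarrow> nat) \<Rightarrow> real) \<Rightarrow> 'v \<Rightarrow> ('v \<Rightarrow> nat) \<Rightarrow> real" where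
  "Uc V n uu w s = (\<Sum>i<n. uu i w (proj V i s))"

lemma Sc_dec: "x \<in> Sc n w \<Longrightarrow> set_decode x \<subseteq> {..<n}"
  unfolding Sc_def by (auto simp: finite_subset)

lemma Sc_enc: "T \<subseteq> {..<n} \<Longrightarrow> set_encode T \<in> Sc n w"
  unfolding Sc_def by blast

lemma proj_prof: "proj V i s \<in> profiles V Sb"
  unfolding profiles_def proj_def by auto

lemma proj_upd: "w \<in> V \<Longrightarrow> proj V i (s(w:=x)) = (proj V i s)(w := (if i \<in> set_decode x then 1 else 0))"
  unfolding proj_def by (rule ext) auto

lemma comb_game:
  assumes "\<And>i. i < n \<Longrightarrow> is_game V E Sb (uu i)"
  shows "is_game V E (Sc n) (Uc V n uu)"
  unfolding is_game_def
proof (intro conjI ballI impI)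
  fix v assume "v \<in> V" show "finite (Sc n v)" unfolding Sc_def by simp
next
  fix v s t assume v: "v \<in> V" and s: "s \<in> profiles V (Sc n)" and t: "t \<in> profiles V (Sc n)"
    and ag: "agree_on (AdjPlus V E v) s t"
  have "agree_on (AdjPlus V E v) (proj V i s) (proj V i t)" for i
    using ag unfolding agree_on_def proj_def by auto
  then have "uu i v (proj V i s) = uu i v (proj V i t)" if "i < n" for i
    using assms[OF that] v proj_prof unfolding is_game_def by blast
  then show "Uc V n uu v s = Uc V n uu v t" unfolding Uc_def by (intro sum.cong) auto
qed

lemma comb_NE:
  assumes s: "s \<in> profiles V (Sc n)"
  shows "s \<in> NE V (Sc n) (Uc V n uu) \<longleftrightarrow> (\<forall>i<n. proj V i s \<in> NE V Sb (uu i))"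
proof
  assume ne: "s \<in> NE V (Sc n) (Uc V n uu)"
  show "\<forall>i<n. proj V i s \<in> NE V Sb (uu i)"
  proof (intro allI impI)
    fix i assume i: "i < n"
    show "proj V i s \<in> NE V Sb (uu i)"
      unfolding NE_def
    proof (intro CollectI conjI ballI proj_prof)
      fix w y assume w: "w \<in> V" and y: "y \<in> {0::nat,1}"
      show "uu i w ((proj V i s)(w := y)) \<le> uu i w (proj V i s)"
      proof (rule ccontr)
        assume gt: "\<not> ?thesis"
        define T where "T = set_decode (s w)"
        have swS: "s w \<in> Sc n w" using s w unfolding profiles_def by blast
        have TS: "T \<subseteq> {..<n}" using Sc_dec[OF swS] unfolding T_def .
        define T' where "T' = (if y = 1 then insert i T else T - {i})"
        have T'S: "T' \<subseteq> {..<n}" using TS i unfolding T'_def by auto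
        have finT': "finite T'" using T'S finite_subset by blast
        define x where "x = set_encode T'"
        have xS: "x \<in> Sc n w" unfolding x_def by (rule Sc_enc[OF T'S])
        have dx: "set_decode x = T'" unfolding x_def using finT' by simp
        have pj: "proj V j (s(w:=x)) = proj V j s" if "j \<noteq> i" for j
        proof -
          have "(j \<in> T') = (j \<in> T)" using that unfolding T'_def by auto
          then have "proj V j s w = (if j \<in> T' then 1 else 0)" using w unfolding proj_def T_def by simp
          then show ?thesis unfolding proj_upd[OF w] dx by (simp add: fun_upd_idem)
        qed
        have iy: "(if i \<in> T' then 1 else 0) = y" using y unfolding T'_def by auto
        have pi: "proj V i (s(w:=x)) = (proj V i s)(w := y)"
          unfolding proj_upd[OF w] dx iy ..
        have r1: "Uc V n uu w (s(w:=x)) = uu i w (proj V i (s(w:=x))) + (\<Sum>j\<in>{..<n} - {i}. uu j w (proj V j (s(w:=x))))"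
          unfolding Uc_def using i by (intro sum.remove) auto
        have r2: "(\<Sum>j\<in>{..<n} - {i}. uu j w (proj V j (s(w:=x)))) = (\<Sum>j\<in>{..<n} - {i}. uu j w (proj V j s))"
          using pj by (intro sum.cong) auto
        have r3: "Uc V n uu w s = uu i w (proj V i s) + (\<Sum>j\<in>{..<n} - {i}. uu j w (proj V j s))"
          unfolding Uc_def using i by (intro sum.remove) auto
        have "Uc V n uu w (s(w:=x)) = uu i w ((proj V i s)(w := y)) + (\<Sum>j\<in>{..<n} - {i}. uu j w (proj V j s))"
          using r1 r2 pi by simp
        also have "\<dots> > uu i w (proj V i s) + (\<Sum>j\<in>{..<n} - {i}. uu j w (proj V j s))" using gt by simp
        also have "uu i w (proj V i s) + (\<Sum>j\<in>{..<n} - {i}. uu j w (proj V j s)) = Uc V n uu w s"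
          using r3 by simp
        finally have "Uc V n uu w (s(w:=x)) > Uc V n uu w s" .
        moreover have "\<forall>v\<in>V. \<forall>x\<in>Sc n v. Uc V n uu v (s(v:=x)) \<le> Uc V n uu v s" using ne unfolding NE_def by blast
        then have "Uc V n uu w (s(w:=x)) \<le> Uc V n uu w s" using w xS by blast
        ultimately show False by simp
      qed
    qed
  qed
next
  assume all: "\<forall>i<n. proj V i s \<in> NE V Sb (uu i)"
  show "s \<in> NE V (Sc n) (Uc V n uu)"
    unfolding NE_def
  proof (intro CollectI conjI ballI s)
    fix w x assume w: "w \<in> V" and x: "x \<in> Sc n w"
    have "uu i w (proj V i (s(w:=x))) \<le> uu i w (proj V i s)" if "i < n" for i
      using all that w unfolding proj_upd[OF w] NE_def by auto
    then show "Uc V n uu w (s(w := x)) \<le> Uc V n uu w s" unfolding Uc_def by (intro sum_mono) auto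
  qed
qed

lemma comb_agree:
  assumes s: "s \<in> profiles V (Sc n)" and t: "t \<in> profiles V (Sc n)"
  shows "agree_on Q s t \<longleftrightarrow> (\<forall>i<n. agree_on Q (proj V i s) (proj V i t))"
proof -
  have pt: "s w = t w \<longleftrightarrow> (\<forall>i<n. proj V i s w = proj V i t w)" for w
  proof (cases "w \<in> V")
    case True
    have sw: "s w \<in> Sc n w" "t w \<in> Sc n w" using s t True unfolding profiles_def by blast+
    have ds: "set_decode (s w) \<subseteq> {..<n}" "set_decode (t w) \<subseteq> {..<n}"
      using Sc_dec[OF sw(1)] Sc_dec[OF sw(2)] .
    have "s w = t w \<longleftrightarrow> set_decode (s w) = set_decode (t w)"
      by (metis set_decode_inverse)
    also have "\<dots> \<longleftrightarrow> (\<forall>i<n. (i \<in> set_decode (s w)) = (i \<in> set_decode (t w)))"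
    proof
      assume H: "\<forall>i<n. (i \<in> set_decode (s w)) = (i \<in> set_decode (t w))"
      show "set_decode (s w) = set_decode (t w)"
      proof (rule set_eqI)
        fix i show "(i \<in> set_decode (s w)) = (i \<in> set_decode (t w))"
          using H ds by (cases "i < n") auto
      qed
    qed simp
    also have "\<dots> \<longleftrightarrow> (\<forall>i<n. proj V i s w = proj V i t w)" unfolding proj_def using True by auto
    finally show ?thesis .
  next
    case False
    then show ?thesis using s t unfolding profiles_def proj_def by auto
  qed
  show ?thesis unfolding agree_on_def pt by blast
qed

definition combine :: "'v set \<Rightarrow> nat \<Rightarrow> (nat \<Rightarrow> 'v \<Rightarrow> nat) \<Rightarrow> 'v \<Rightarrow> nat" where
  "combine V n c = (\<lambda>w. if w \<in> V then set_encode {i. i < n \<and> c i w = 1} else 0)"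

lemma combine_prof: "combine V n c \<in> profiles V (Sc n)"
  unfolding profiles_def combine_def by (auto intro: Sc_enc)

lemma combine_proj:
  assumes "c i \<in> profiles V Sb" "i < n"
  shows "proj V i (combine V n c) = c i"
proof (rule ext)
  fix w
  have fin: "finite {i. i < n \<and> c i w = 1}" by simp
  show "proj V i (combine V n c) w = c i w"
    using assms fin unfolding proj_def combine_def profiles_def by auto
qed

lemma comb_sat:
  assumes z: "\<And>i. i < n \<Longrightarrow> (\<lambda>_. 0) \<in> NE V Sb (uu i)"
  shows "sat V (Sc n) (Uc V n uu) (Rhd P Q) \<longleftrightarrow> (\<forall>i<n. sat V Sb (uu i) (Rhd P Q))"
proof
  assume H: "sat V (Sc n) (Uc V n uu) (Rhd P Q)"
  show "\<forall>i<n. sat V Sb (uu i) (Rhd P Q)"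
  proof (intro allI impI)
    fix i assume i: "i < n"
    show "sat V Sb (uu i) (Rhd P Q)" unfolding sat.simps
    proof (intro ballI impI)
      fix a b assume a: "a \<in> NE V Sb (uu i)" and b: "b \<in> NE V Sb (uu i)" and ab: "agree_on P a b"
      define ca where "ca = (\<lambda>j. if j = i then a else (\<lambda>_. 0::nat))"
      define cb where "cb = (\<lambda>j. if j = i then b else (\<lambda>_. 0::nat))"
      have NEa: "ca j \<in> NE V Sb (uu j)" if "j < n" for j using z[OF that] a unfolding ca_def by auto
      have NEb: "cb j \<in> NE V Sb (uu j)" if "j < n" for j using z[OF that] b unfolding cb_def by auto
      have pa: "proj V j (combine V n ca) = ca j" if "j < n" for j
      proof -
        have "ca j \<in> profiles V Sb" using NEa[OF that] unfolding NE_def by blast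
        then show ?thesis by (rule combine_proj[OF _ that])
      qed
      have pb: "proj V j (combine V n cb) = cb j" if "j < n" for j
      proof -
        have "cb j \<in> profiles V Sb" using NEb[OF that] unfolding NE_def by blast
        then show ?thesis by (rule combine_proj[OF _ that])
      qed
      have "\<forall>j<n. proj V j (combine V n ca) \<in> NE V Sb (uu j)" using pa NEa by simp
      then have sN: "combine V n ca \<in> NE V (Sc n) (Uc V n uu)"
        by (rule comb_NE[OF combine_prof, THEN iffD2])
      have "\<forall>j<n. proj V j (combine V n cb) \<in> NE V Sb (uu j)" using pb NEb by simp
      then have tN: "combine V n cb \<in> NE V (Sc n) (Uc V n uu)"
        by (rule comb_NE[OF combine_prof, THEN iffD2])
      have "agree_on P (proj V j (combine V n ca)) (proj V j (combine V n cb))" if "j < n" for j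
        unfolding pa[OF that] pb[OF that] using ab unfolding ca_def cb_def agree_on_def by simp
      then have "agree_on P (combine V n ca) (combine V n cb)"
        by (subst comb_agree[OF combine_prof combine_prof]) blast
      then have "agree_on Q (combine V n ca) (combine V n cb)" using H sN tN unfolding sat.simps by blast
      then have "agree_on Q (proj V i (combine V n ca)) (proj V i (combine V n cb))"
        using comb_agree[OF combine_prof combine_prof] i by blast
      then have "agree_on Q (ca i) (cb i)" unfolding pa[OF i] pb[OF i] .
      then show "agree_on Q a b" unfolding ca_def cb_def by simp
    qed
  qed
next
  assume H: "\<forall>i<n. sat V Sb (uu i) (Rhd P Q)"
  show "sat V (Sc n) (Uc V n uu) (Rhd P Q)" unfolding sat.simps
  proof (intro ballI impI)
    fix s t assume s: "s \<in> NE V (Sc n) (Uc V n uu)" and t: "t \<in> NE V (Sc n) (Uc V n uu)"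
      and st: "agree_on P s t"
    have sp: "s \<in> profiles V (Sc n)" "t \<in> profiles V (Sc n)" using s t unfolding NE_def by auto
    have ps: "\<forall>i<n. proj V i s \<in> NE V Sb (uu i)" using comb_NE[OF sp(1)] s by blast
    have pt: "\<forall>i<n. proj V i t \<in> NE V Sb (uu i)" using comb_NE[OF sp(2)] t by blast
    have pa: "\<forall>i<n. agree_on P (proj V i s) (proj V i t)" using st comb_agree[OF sp] by blast
    have "agree_on Q (proj V i s) (proj V i t)" if i: "i < n" for i
    proof -
      have "sat V Sb (uu i) (Rhd P Q)" using H i by blast
      then show ?thesis unfolding sat.simps using ps pt pa i by blast
    qed
    then have "\<forall>i<n. agree_on Q (proj V i s) (proj V i t)" by blast
    then show "agree_on Q s t" using comb_agree[OF sp] by blast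
  qed
qed



context valid begin
lemma Dset_conn:
  assumes "Pr v" and step: "\<And>a b. a \<in> Dset X v \<Longrightarrow> b \<in> Dset X v \<Longrightarrow> (E a b \<or> (\<exists>y. E a y \<and> E y b)) \<Longrightarrow> Pr a \<Longrightarrow> Pr b"
  shows "\<forall>w\<in>Dset X v. Pr w"
proof
  fix w assume "w \<in> Dset X v"
  then have "(Rel X)\<^sup>*\<^sup>* v w" unfolding Dset_def by simp
  then show "Pr w"
  proof (induction rule: rtranclp_induct)
    case base then show ?case using assms(1) .
  next
    case (step a b)
    have aD: "a \<in> Dset X v" using step(1) unfolding Dset_def by simp
    have bD: "b \<in> Dset X v" using step(1,2) unfolding Dset_def
      by (auto intro: rtranclp.rtrancl_into_rtrancl)
    have "E a b \<or> (\<exists>y. E a y \<and> E y b)" using step(2) unfolding Rel_def by blast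
    then show ?case using assms(2)[OF aD bD] step(3) by blast
  qed
qed

end

lemma sat_peval:
  assumes "\<And>P Q. P \<subseteq> V \<Longrightarrow> Q \<subseteq> V \<Longrightarrow> sat V S u (Rhd P Q) \<longleftrightarrow> I P Q"
  shows "wf_fml V \<phi> \<Longrightarrow> sat V S u \<phi> \<longleftrightarrow> peval I \<phi>"
  using assms by (induction \<phi>) auto

theorem theorem1:
  fixes V :: "'v set" and E :: "'v \<Rightarrow> 'v \<Rightarrow> bool" and \<phi> :: "'v fml"
  assumes "graph V E"
    and "wf_fml V \<phi>"
    and "\<not> derivable V E \<phi>"
  shows "\<exists>S u. is_game V E S u \<and> \<not> sat V S u \<phi>"
proof -
  have gr: "graph V E" by fact
  have finV: "finite V" using gr unfolding graph_def by blast
  obtain I0 where I0: "\<forall>\<psi>. derivable V E \<psi> \<longrightarrow> peval I0 \<psi>" and nphi: "\<not> peval I0 \<phi>"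
    using exists_val[OF assms(2,3) finV] by blast
  interpret valid V E I0
  proof
    show "graph V E" by fact
  next
    fix A B assume "A \<subseteq> V" "B \<subseteq> A" then show "I0 A B"
      using I0 derivable.refl[of A V B E] by auto
  next
    fix A B C assume "A \<subseteq> V" "B \<subseteq> V" "C \<subseteq> V" "I0 A B" then show "I0 (A \<union> C) (B \<union> C)"
      using I0 derivable.aug[of A V B C E] by auto
  next
    fix A B C assume "A \<subseteq> V" "B \<subseteq> V" "C \<subseteq> V" "I0 A B" "I0 B C" then show "I0 A C"
      using I0 derivable.trans[of A V B C E] by auto
  next
    fix A B C U W assume "A \<subseteq> V" "B \<subseteq> V" "C \<subseteq> V" "is_cut V U W" "A \<subseteq> U" "C \<subseteq> W" "I0 (A \<union> B) C"
    then show "I0 (border V E U \<union> border V E W \<union> B) C"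
      using I0 derivable.contig[of A V B C U W E] by auto
  qed
  define Bad where "Bad = {(P, q). P \<subseteq> V \<and> q \<in> V \<and> \<not> I0 P {q}}"
  have "Bad \<subseteq> Pow V \<times> V" unfolding Bad_def by blast
  then have "finite Bad" using finV finite_subset by blast
  then obtain ps where ps: "set ps = Bad" using finite_list by blast
  define n where "n = length ps"
  define D where "D i = Dset (cl (fst (ps ! i))) (snd (ps ! i))" for i
  define uu where "uu i = ug V E (D i)" for i
  have facts: "fst (ps ! i) \<subseteq> V \<and> snd (ps ! i) \<in> V - cl (fst (ps ! i))" if "i < n" for i
  proof -
    have "ps ! i \<in> Bad" using that ps unfolding n_def by (metis nth_mem)
    then show ?thesis unfolding Bad_def cl_def by auto
  qed
  have DV: "D i \<subseteq> V" if "i < n" for i using Dset_sub facts[OF that] unfolding D_def by blast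
  have vD: "snd (ps ! i) \<in> D i" for i unfolding D_def by (rule Dset_v)
  have conn: "\<And>Pr. Pr (snd (ps ! i)) \<Longrightarrow> (\<And>a b. a \<in> D i \<Longrightarrow> b \<in> D i \<Longrightarrow> (E a b \<or> (\<exists>y. E a y \<and> E y b)) \<Longrightarrow> Pr a \<Longrightarrow> Pr b)
              \<Longrightarrow> \<forall>w\<in>D i. Pr w" for i
    unfolding D_def by (rule Dset_conn)
  have z: "(\<lambda>_. 0) \<in> NE V Sb (uu i)" if "i < n" for i
  proof -
    have "(\<lambda>_. 0) \<in> NE V Sb (ug V E (D i))"
      apply (rule zz_NE'[OF gr DV[OF that] vD])
      apply (rule conn)
      by assumption+
    then show ?thesis unfolding uu_def .
  qed
  have satD: "sat V Sb (uu i) (Rhd P Q) \<longleftrightarrow> (P \<inter> D i = {} \<longrightarrow> Q \<inter> D i = {})" if "i < n" for i P Q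
  proof -
    have "sat V Sb (ug V E (D i)) (Rhd P Q) \<longleftrightarrow> (P \<inter> D i = {} \<longrightarrow> Q \<inter> D i = {})"
      apply (rule sat_D[OF gr DV[OF that] vD])
      apply (rule conn)
      by assumption+
    then show ?thesis unfolding uu_def .
  qed
  have key: "sat V (Sc n) (Uc V n uu) (Rhd P Q) \<longleftrightarrow> I0 P Q" if P: "P \<subseteq> V" and Q: "Q \<subseteq> V" for P Q
  proof -
    have "sat V (Sc n) (Uc V n uu) (Rhd P Q) \<longleftrightarrow> (\<forall>i<n. P \<inter> D i = {} \<longrightarrow> Q \<inter> D i = {})"
      using comb_sat[of n V uu P Q] z satD by simp
    also have "\<dots> \<longleftrightarrow> I0 P Q"
    proof
      assume H: "\<forall>i<n. P \<inter> D i = {} \<longrightarrow> Q \<inter> D i = {}"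
      show "I0 P Q"
      proof (rule ccontr)
        assume "\<not> I0 P Q"
        then obtain q where q: "q \<in> Q" "\<not> I0 P {q}" using I_single[OF P Q] by blast
        have "(P, q) \<in> set ps" using ps q P Q unfolding Bad_def by blast
        then obtain i where i: "i < n" "ps ! i = (P, q)" unfolding n_def by (metis in_set_conv_nth)
        have Di: "D i = Dset (cl P) q" unfolding D_def i(2) by simp
        have qcl: "q \<in> V - cl P" using facts[OF i(1)] i(2) by simp
        have "P \<inter> D i = {}" using Dset_sub[OF qcl] cl_ext[OF P] unfolding Di by blast
        moreover have "q \<in> Q \<inter> D i" using q Dset_v unfolding Di by blast
        ultimately show False using H i by blast
      qed
    next
      assume IPQ: "I0 P Q"
      show "\<forall>i<n. P \<inter> D i = {} \<longrightarrow> Q \<inter> D i = {}"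
      proof (intro allI impI)
        fix i assume i: "i < n" and dis: "P \<inter> D i = {}"
        show "Q \<inter> D i = {}"
          using Dset_valid[of "fst (ps ! i)" "snd (ps ! i)" P Q] facts[OF i] P Q IPQ dis
          unfolding D_def by blast
      qed
    qed
    finally show ?thesis .
  qed
  have game: "is_game V E (Sc n) (Uc V n uu)"
    by (rule comb_game) (unfold uu_def, rule ug_game)
  have "\<not> sat V (Sc n) (Uc V n uu) \<phi>"
    using sat_peval[of V "Sc n" "Uc V n uu" I0, OF key assms(2)] nphi by blast
  then show ?thesis using game by blast
qed

end
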